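(* Let $(L^+,L^-)$ be a pair of fully transverse prelaminations of $S^1$. Define $\bar L^\pm:=\{(a,a')\in S^1\times S^1: a\neq a',\ \exists (a_n,a_n')\in L^\pm \text{ converging to } (a,a')\}$. Then for any subsets $\hat L^+,\hat L^-$ with $L^\pm\subseteq\hat L^\pm\subseteq\bar L^\pm$, the pair $(\hat L^+,\hat L^-)$ is a pair of fully transverse prelaminations.
   Context: Pairs $\{a_1,a_2\},\{b_1,b_2\}$ of distinct points of $S^1$ cross if $a_1,a_2$ lie in different components of $S^1\setminus\{b_1,b_2\}$. A prelamination is a set of unordered pairs of distinct points of $S^1$ (leaves) no two of which cross; pairs in $\bar L^\pm$ are regarded as unordered. $(L^+,L^-)$ is fully transverse if $L^+\cap L^-=\emptyset$, the set of endpoints of leaves of $L^+\cup L^-$ is dense in $S^1$, and for any $\alpha,\beta\in L^+\cup L^-$ there is a sequence $\alpha=\alpha_1,\dots,\alpha_k=\beta$ of leaves of $L^+\cup L^-$ with $\alpha_i$ crossing $\alpha_{i+1}$. *)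

theory Defs
  imports "HOL-Analysis.Analysis"
begin

definition S1 :: "complex set" where
  "S1 = sphere 0 1"

text \<open>An unordered pair of distinct points of S^1 is represented as the two-element set.\<close>
definition is_pair :: "complex set \<Rightarrow> bool" where
  "is_pair \<alpha> \<longleftrightarrow> (\<exists>a b. \<alpha> = {a, b} \<and> a \<noteq> b \<and> a \<in> S1 \<and> b \<in> S1)"

definition crosses :: "complex set \<Rightarrow> complex set \<Rightarrow> bool" where
  "crosses \<alpha> \<beta> \<longleftrightarrow> is_pair \<alpha> \<and> is_pair \<beta> \<and>
     (\<exists>a1 a2. \<alpha> = {a1, a2} \<and> a1 \<in> S1 - \<beta> \<and> a2 \<in> S1 - \<beta> \<and>
        connected_component_set (S1 - \<beta>) a1 \<noteq> connected_component_set (S1 - \<beta>) a2)"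

definition prelamination :: "complex set set \<Rightarrow> bool" where
  "prelamination L \<longleftrightarrow> (\<forall>\<alpha>\<in>L. is_pair \<alpha>) \<and> (\<forall>\<alpha>\<in>L. \<forall>\<beta>\<in>L. \<not> crosses \<alpha> \<beta>)"

definition endpoints :: "complex set set \<Rightarrow> complex set" where
  "endpoints L = \<Union>L"

definition fully_transverse :: "complex set set \<Rightarrow> complex set set \<Rightarrow> bool" where
  "fully_transverse Lp Lm \<longleftrightarrow>
     Lp \<inter> Lm = {} \<and>
     S1 \<subseteq> closure (endpoints (Lp \<union> Lm)) \<and>
     (\<forall>\<alpha>\<in>Lp \<union> Lm. \<forall>\<beta>\<in>Lp \<union> Lm.
        \<exists>xs. xs \<noteq> [] \<and> hd xs = \<alpha> \<and> last xs = \<beta> \<and> set xs \<subseteq> Lp \<union> Lm \<and>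
          (\<forall>i. Suc i < length xs \<longrightarrow> crosses (xs ! i) (xs ! Suc i)))"

definition lam_closure :: "complex set set \<Rightarrow> complex set set" where
  "lam_closure L = {{a, a'} | a a'. a \<noteq> a' \<and>
      (\<exists>x y. (\<forall>n. {x n, y n} \<in> L) \<and> x \<longlonglongrightarrow> a \<and> y \<longlonglongrightarrow> a')}"

end

theory Submission
  imports Defs
begin
definition sg :: "complex \<Rightarrow> complex \<Rightarrow> complex \<Rightarrow> real" where
  "sg b b' z = Im ((z - b) * cnj (b' - b))"

lemma sg_flip: "sg b' b z = - sg b b' z"
  by (simp add: sg_def algebra_simps)

lemma sg_b [simp]: "sg b b' b = 0" "sg b b' b' = 0"
  by (simp_all add: sg_def algebra_simps)

lemma S1_cnj: "z \<in> S1 \<Longrightarrow> z * cnj z = 1"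
  by (simp add: S1_def complex_mult_cnj cmod_def)

lemma sg_factor:
  assumes "b \<in> S1" "b' \<in> S1" "z \<in> S1"
  shows "complex_of_real (2 * sg b b' z) * \<i> * (b * b' * z) = (z - b) * (b - b') * (z - b')"
proof -
  have hb: "b * cnj b = 1" and hb': "b' * cnj b' = 1" and hz: "z * cnj z = 1"
    using assms S1_cnj by auto
  have "complex_of_real (2 * sg b b' z) * \<i> = (z - b) * cnj (b' - b) - cnj ((z - b) * cnj (b' - b))"
    unfolding sg_def by (simp only: complex_diff_cnj)
  then have "complex_of_real (2 * sg b b' z) * \<i> = (z - b) * (cnj b' - cnj b) - (cnj z - cnj b) * (b' - b)"
    by simp
  then show ?thesis using hb hb' hz by algebra
qed

lemma sg_zero:
  assumes "b \<in> S1" "b' \<in> S1" "z \<in> S1" "b \<noteq> b'" "sg b b' z = 0"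
  shows "z = b \<or> z = b'"
  using sg_factor[OF assms(1-3)] assms by simp

lemma sg_cont: "continuous_on S (sg b b')"
  unfolding sg_def by (intro continuous_intros)

lemma ivt0:
  fixes g :: "complex \<Rightarrow> real"
  assumes "connected S" "continuous_on S g" "x \<in> S" "y \<in> S" "g x \<le> 0" "0 \<le> g y"
  shows "\<exists>z\<in>S. g z = 0"
proof -
  have "connected (g ` S)" using assms connected_continuous_image by blast
  then obtain w where "w \<in> g ` S" "inner 1 w = (0::real)"
    using connected_ivt_hyperplane[of "g ` S" "g x" "g y" 1 0] assms by auto
  then show ?thesis by auto
qed

lemma sg_const_sign:
  assumes "connected C" "C \<subseteq> S1 - {b,b'}" "b \<noteq> b'" "b \<in> S1" "b' \<in> S1" "x \<in> C" "y \<in> C"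
  shows "sg b b' x * sg b b' y > 0"
proof (rule ccontr)
  assume H: "\<not> ?thesis"
  have nz: "z \<in> C \<Longrightarrow> sg b b' z \<noteq> 0" for z
    using sg_zero[of b b' z] assms by auto
  have "\<exists>z\<in>C. sg b b' z = 0"
  proof (cases "sg b b' x \<le> 0")
    case True
    then have "0 \<le> sg b b' y" using H nz[OF assms(6)] mult_neg_neg[of "sg b b' x" "sg b b' y"]
      by linarith
    then show ?thesis using ivt0[OF assms(1) sg_cont assms(6,7)] True by blast
  next
    case False
    then have "sg b b' y \<le> 0" using H mult_pos_pos[of "sg b b' x" "sg b b' y"]
      by linarith
    then show ?thesis using ivt0[OF assms(1) sg_cont assms(7,6)] False by auto
  qed
  then show False using nz by blast
qed

lemma side_pos:
  assumes "b \<in> S1" "b' \<in> S1" "b \<noteq> b'"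
  shows "\<exists>u\<in>S1. sg b b' u > 0"
proof -
  define d where "d = b' - b"
  define w where "w = b * cnj d"
  have d0: "d \<noteq> 0" using assms d_def by auto
  have hb: "b * cnj b = 1" and hb': "b' * cnj b' = 1" using assms S1_cnj by auto
  have w: "w = b * cnj b' - 1" using hb by (simp add: w_def d_def algebra_simps)
  have nb: "cmod b = 1" using assms by (simp add: S1_def)
  have cw: "cmod w = cmod d" by (simp add: w_def norm_mult nb)
  have "Re w \<noteq> 0"
  proof
    assume "Re w = 0"
    then have r: "Re (b * cnj b') = 1" using w by simp
    have "cmod (b * cnj b') = 1" using assms by (simp add: S1_def norm_mult)
    then have "Im (b * cnj b') = 0" using r Im_eq_0[of "b * cnj b'"]
      by simp
    then have "b * cnj b' = 1" using r by (simp add: complex_eq_iff)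
    then have "b * cnj b' = b' * cnj b'" using hb' by simp
    moreover have "cnj b' \<noteq> 0" using hb' by auto
    ultimately show False using assms(3) by simp
  qed
  then have "Im w ^ 2 < Re w ^ 2 + Im w ^ 2" by simp
  then have "sqrt (Im w ^ 2) < sqrt (Re w ^ 2 + Im w ^ 2)" by (rule real_sqrt_less_mono)
  then have "\<bar>Im w\<bar> < cmod w" by (simp add: cmod_def)
  then have lt: "Im w < cmod d"
    using cw by linarith
  define u where "u = \<i> * d / of_real (cmod d)"
  have uS: "u \<in> S1" using d0 by (simp add: u_def S1_def norm_divide norm_mult)
  have "u * cnj d = \<i> * of_real (cmod d)"
  proof -
    have dd: "d * cnj d = of_real (cmod d) ^ 2" using complex_norm_square[of d] by simp
    have "u * cnj d = \<i> * (d * cnj d) / of_real (cmod d)" by (simp add: u_def)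
    also have "\<dots> = \<i> * of_real (cmod d)" using d0 unfolding dd by (simp add: power2_eq_square)
    finally show ?thesis .
  qed
  then have "sg b b' u = cmod d - Im w"
    by (simp add: sg_def d_def[symmetric] w_def algebra_simps)
  then show ?thesis using uS lt by (intro bexI[of _ u]) auto
qed

lemma arc_ok:
  fixes f :: "real \<Rightarrow> complex"
  assumes "continuous_on UNIV f" "lo < hi"
  shows "connected (f ` {lo<..<hi}) \<and> f lo \<in> closure (f ` {lo<..<hi}) \<and> f hi \<in> closure (f ` {lo<..<hi})"
proof -
  have "connected (f ` {lo<..<hi})"
    by (rule connected_continuous_image) (auto intro: continuous_on_subset[OF assms(1)])
  moreover have "f ` closure {lo<..<hi} \<subseteq> closure (f ` {lo<..<hi})"
    apply (rule image_closure_subset)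
      apply (rule continuous_on_subset[OF assms(1)], simp)
     apply simp
    apply (rule closure_subset)
    done
  ultimately show ?thesis using assms(2) by auto
qed

lemma pos_side:
  assumes bS: "b \<in> S1" and b'S: "b' \<in> S1" and bb: "b \<noteq> b'"
  defines "P \<equiv> {z\<in>S1. sg b b' z > 0}"
  shows "connected P \<and> b \<in> closure P \<and> b' \<in> closure P \<and> P \<noteq> {}"
proof -
  define f where "f t = b * exp (\<i> * of_real t)" for t :: real
  have hb: "b * cnj b = 1" using bS S1_cnj by auto
  have nb: "cmod b = 1" using bS by (simp add: S1_def)
  have fc: "continuous_on UNIV f" unfolding f_def by (intro continuous_intros)
  have fS: "f t \<in> S1" for t by (simp add: f_def S1_def norm_mult nb)
  have repr: "z = f (Arg2pi (z * cnj b))" if "z \<in> S1" for z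
  proof -
    have "cmod (z * cnj b) = 1" using that nb by (simp add: S1_def norm_mult)
    then have "z * cnj b = exp (\<i> * of_real (Arg2pi (z * cnj b)))"
      using Arg2pi_eq[of "z * cnj b"] by simp
    then have "b * (z * cnj b) = f (Arg2pi (z * cnj b))" by (simp add: f_def)
    then show ?thesis using hb by (metis mult.commute mult.left_commute mult_1_right)
  qed
  have arg_f: "Arg2pi (f t * cnj b) = t" if "0 \<le> t" "t < 2*pi" for t
  proof -
    have "f t * cnj b = exp (\<i> * of_real t)" using hb by (simp add: f_def algebra_simps)
    then show ?thesis using Arg2pi_unique[of 1 t "f t * cnj b"] that by simp
  qed
  have finj: "s = t" if "0 \<le> s" "s < 2*pi" "0 \<le> t" "t < 2*pi" "f s = f t" for s t
    using arg_f[of s] arg_f[of t] that by metis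
  define al where "al = Arg2pi (b' * cnj b)"
  have al: "0 \<le> al" "al < 2*pi" using Arg2pi[of "b' * cnj b"] by (auto simp: al_def)
  have fal: "f al = b'" using repr[OF b'S] by (simp add: al_def)
  have f0: "f 0 = b" by (simp add: f_def)
  have f2: "f (2*pi) = b" by (simp add: f_def exp_eq_1 mult.commute)
  have al0: "0 < al" using al fal f0 bb by (cases "al = 0") auto
  define I1 where "I1 = f ` {0<..<al}"
  define I2 where "I2 = f ` {al<..<2*pi}"
  have A1: "connected I1 \<and> b' \<in> closure I1 \<and> b \<in> closure I1"
    using arc_ok[OF fc al0] f0 fal by (simp add: I1_def)
  have A2: "connected I2 \<and> b' \<in> closure I2 \<and> b \<in> closure I2"
    using arc_ok[OF fc al(2)] f2 fal by (simp add: I2_def)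
  have I1S: "I1 \<subseteq> S1 - {b,b'}"
  proof
    fix z assume "z \<in> I1"
    then obtain t where t: "0 < t" "t < al" "z = f t" by (auto simp: I1_def)
    have "f t \<noteq> b" using finj[of t 0] t al f0 by auto
    moreover have "f t \<noteq> b'" using finj[of t al] t al fal by auto
    ultimately show "z \<in> S1 - {b,b'}" using t fS by auto
  qed
  have I2S: "I2 \<subseteq> S1 - {b,b'}"
  proof
    fix z assume "z \<in> I2"
    then obtain t where t: "al < t" "t < 2*pi" "z = f t" by (auto simp: I2_def)
    have "f t \<noteq> b" using finj[of t 0] t al f0 by auto
    moreover have "f t \<noteq> b'" using finj[of t al] t al fal by auto
    ultimately show "z \<in> S1 - {b,b'}" using t fS by auto
  qed
  have cover: "S1 - {b,b'} \<subseteq> I1 \<union> I2"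
  proof
    fix z assume z: "z \<in> S1 - {b,b'}"
    define t where "t = Arg2pi (z * cnj b)"
    have zt: "z = f t" using repr z by (simp add: t_def)
    have t: "0 \<le> t" "t < 2*pi" using Arg2pi[of "z * cnj b"] by (auto simp: t_def)
    have "t \<noteq> 0" using zt f0 z by auto
    moreover have "t \<noteq> al" using zt fal z by auto
    ultimately have "t \<in> {0<..<al} \<or> t \<in> {al<..<2*pi}" using t by auto
    then show "z \<in> I1 \<union> I2" using zt by (auto simp: I1_def I2_def)
  qed
  obtain u where u: "u \<in> S1" "sg b b' u > 0" using side_pos[OF bS b'S bb] by auto
  obtain v where v: "v \<in> S1" "sg b b' v < 0" using side_pos[OF b'S bS bb[symmetric]] sg_flip
    by (metis neg_0_less_iff_less)
  have uI: "u \<in> I1 \<union> I2" using cover u by auto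
  have vI: "v \<in> I1 \<union> I2" using cover v by auto
  have key: "P = I" if I: "connected I" "I \<subseteq> S1 - {b,b'}" "u \<in> I"
     and J: "connected J" "J \<subseteq> S1 - {b,b'}" "v \<in> J" and IJ: "S1 - {b,b'} \<subseteq> I \<union> J" for I J
  proof
    show "I \<subseteq> P"
    proof
      fix z assume "z \<in> I"
      then have "sg b b' u * sg b b' z > 0" using sg_const_sign[OF I(1,2) bb bS b'S I(3)] by auto
      then have "sg b b' z > 0" using u(2) by (simp add: zero_less_mult_iff)
      then show "z \<in> P" using \<open>z \<in> I\<close> I(2) by (auto simp: P_def)
    qed
    show "P \<subseteq> I"
    proof
      fix z assume z: "z \<in> P"
      then have "z \<notin> {b,b'}" by (auto simp: P_def)
      then have "z \<in> I \<union> J" using IJ z by (auto simp: P_def)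
      moreover have "z \<notin> J"
      proof
        assume "z \<in> J"
        then have "sg b b' v * sg b b' z > 0" using sg_const_sign[OF J(1,2) bb bS b'S J(3)] by auto
        then show False using v(2) z by (simp add: zero_less_mult_iff P_def)
      qed
      ultimately show "z \<in> I" by auto
    qed
  qed
  have "P = I1 \<or> P = I2"
  proof (cases "u \<in> I1")
    case True
    have "v \<notin> I1"
      using sg_const_sign[OF _ I1S bb bS b'S True, of v] A1 u v by (auto simp: zero_less_mult_iff)
    then have "v \<in> I2" using vI by auto
    then show ?thesis using key[of I1 I2] True A1 A2 I1S I2S cover by auto
  next
    case False
    then have uI2: "u \<in> I2" using uI by auto
    have "v \<notin> I2"
      using sg_const_sign[OF _ I2S bb bS b'S uI2, of v] A2 u v by (auto simp: zero_less_mult_iff)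
    then have "v \<in> I1" using vI by auto
    then show ?thesis using key[of I2 I1] uI2 A1 A2 I1S I2S cover by auto
  qed
  moreover have "P \<noteq> {}" using u by (auto simp: P_def)
  ultimately show ?thesis using A1 A2 by auto
qed

lemma neg_side:
  assumes bS: "b \<in> S1" and b'S: "b' \<in> S1" and bb: "b \<noteq> b'"
  shows "connected {z\<in>S1. sg b b' z < 0}"
proof -
  have "{z\<in>S1. sg b b' z < 0} = {z\<in>S1. sg b' b z > 0}" by (auto simp: sg_flip[of b b'])
  then show ?thesis using pos_side[OF b'S bS bb[symmetric]] by simp
qed

lemma comp_iff:
  assumes bS: "b \<in> S1" and b'S: "b' \<in> S1" and bb: "b \<noteq> b'"
    and z1: "z1 \<in> S1 - {b,b'}" and z2: "z2 \<in> S1 - {b,b'}"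
  shows "connected_component_set (S1 - {b,b'}) z1 = connected_component_set (S1 - {b,b'}) z2
         \<longleftrightarrow> sg b b' z1 * sg b b' z2 > 0"
proof
  assume "connected_component_set (S1 - {b,b'}) z1 = connected_component_set (S1 - {b,b'}) z2"
  then have "z2 \<in> connected_component_set (S1 - {b,b'}) z1"
    using connected_component_refl[OF z2] by simp
  moreover have "z1 \<in> connected_component_set (S1 - {b,b'}) z1"
    using connected_component_refl[OF z1] by simp
  ultimately show "sg b b' z1 * sg b b' z2 > 0"
    by (intro sg_const_sign[OF connected_connected_component _ bb bS b'S]) (auto simp: connected_component_subset)
next
  assume H: "sg b b' z1 * sg b b' z2 > 0"
  have sub: "\<And>T. T \<subseteq> S1 \<Longrightarrow> (\<forall>z\<in>T. sg b b' z \<noteq> 0) \<Longrightarrow> T \<subseteq> S1 - {b,b'}" by auto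
  have "\<exists>T. connected T \<and> T \<subseteq> S1 - {b,b'} \<and> z1 \<in> T \<and> z2 \<in> T"
  proof (cases "sg b b' z1 > 0")
    case True
    then have "sg b b' z2 > 0" using H by (simp add: zero_less_mult_iff)
    then show ?thesis using True pos_side[OF bS b'S bb] z1 z2
      by (intro exI[of _ "{z\<in>S1. sg b b' z > 0}"]) auto
  next
    case False
    then have "sg b b' z1 < 0" "sg b b' z2 < 0" using H by (auto simp: zero_less_mult_iff)
    then show ?thesis using neg_side[OF bS b'S bb] z1 z2
      by (intro exI[of _ "{z\<in>S1. sg b b' z < 0}"]) auto
  qed
  then have "z2 \<in> connected_component_set (S1 - {b,b'}) z1"
    by (auto simp: connected_component_def)
  then show "connected_component_set (S1 - {b,b'}) z1 = connected_component_set (S1 - {b,b'}) z2"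
    using connected_component_eq by blast
qed

lemma pair_iff: "is_pair {x, y} \<longleftrightarrow> x \<noteq> y \<and> x \<in> S1 \<and> y \<in> S1"
  unfolding is_pair_def by (auto simp: doubleton_eq_iff)

lemma crosses_iff:
  assumes "a \<noteq> a'" "a \<in> S1" "a' \<in> S1" "b \<noteq> b'" "b \<in> S1" "b' \<in> S1"
  shows "crosses {a,a'} {b,b'} \<longleftrightarrow> sg b b' a * sg b b' a' < 0"
proof
  assume "crosses {a,a'} {b,b'}"
  then obtain a1 a2 where A: "{a,a'} = {a1,a2}" "a1 \<in> S1 - {b,b'}" "a2 \<in> S1 - {b,b'}"
    "connected_component_set (S1 - {b,b'}) a1 \<noteq> connected_component_set (S1 - {b,b'}) a2"
    unfolding crosses_def by blast
  have "\<not> sg b b' a1 * sg b b' a2 > 0" using A comp_iff[OF assms(5,6,4) A(2,3)] by blast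
  moreover have "sg b b' a1 \<noteq> 0" "sg b b' a2 \<noteq> 0" using sg_zero[OF assms(5,6) _ assms(4), of a1] sg_zero[OF assms(5,6) _ assms(4), of a2] A by auto
  ultimately have "sg b b' a1 * sg b b' a2 < 0"
    by (metis linorder_neqE_linordered_idom mult_eq_0_iff)
  moreover have "(a1 = a \<and> a2 = a') \<or> (a1 = a' \<and> a2 = a)" using A(1) by (auto simp: doubleton_eq_iff)
  ultimately show "sg b b' a * sg b b' a' < 0" by (auto simp: mult.commute)
next
  assume H: "sg b b' a * sg b b' a' < 0"
  then have "sg b b' a \<noteq> 0" "sg b b' a' \<noteq> 0" by auto
  then have inn: "a \<in> S1 - {b,b'}" "a' \<in> S1 - {b,b'}" using assms by auto
  then have "connected_component_set (S1 - {b,b'}) a \<noteq> connected_component_set (S1 - {b,b'}) a'"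
    using comp_iff[OF assms(5,6,4) inn] H by auto
  then show "crosses {a,a'} {b,b'}"
    unfolding crosses_def using inn assms by (auto simp: pair_iff)
qed

lemma closed_side:
  assumes bS: "b \<in> S1" and b'S: "b' \<in> S1" and bb: "b \<noteq> b'"
    and g: "is_pair \<gamma>" and d: "is_pair \<delta>"
    and gs: "\<forall>z\<in>\<gamma>. sg b b' z \<ge> 0" and ds: "\<forall>z\<in>\<delta>. sg b b' z \<le> 0"
  shows "\<not> crosses \<gamma> \<delta>"
proof
  assume "crosses \<gamma> \<delta>"
  then obtain g1 g2 where G: "\<gamma> = {g1,g2}" "g1 \<in> S1 - \<delta>" "g2 \<in> S1 - \<delta>"
    "connected_component_set (S1 - \<delta>) g1 \<noteq> connected_component_set (S1 - \<delta>) g2"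
    unfolding crosses_def by blast
  define P where "P = {z\<in>S1. sg b b' z > 0}"
  have PP: "connected P" "b \<in> closure P" "b' \<in> closure P" "P \<noteq> {}"
    using pos_side[OF bS b'S bb] by (auto simp: P_def)
  obtain p where p: "p \<in> P" using PP by auto
  have PS: "P \<subseteq> S1 - \<delta>" using ds by (auto simp: P_def)
  define C where "C = connected_component_set (S1 - \<delta>) p"
  have PC: "P \<subseteq> C" unfolding C_def by (rule connected_component_maximal[OF p PP(1) PS])
  obtain F where F: "closed F" "C = (S1 - \<delta>) \<inter> F"
    using closedin_connected_component[of "S1 - \<delta>" p] unfolding C_def closedin_closed by blast
  have "closure P \<subseteq> F" using PC F by (intro closure_minimal) auto
  have inC: "z \<in> C" if "z \<in> \<gamma>" "z \<in> S1 - \<delta>" for z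
  proof (cases "sg b b' z > 0")
    case True then show ?thesis using PC that by (auto simp: P_def)
  next
    case False
    then have "sg b b' z = 0" using gs that by force
    then have "z = b \<or> z = b'" using sg_zero[OF bS b'S _ bb] that by auto
    then have "z \<in> F" using PP \<open>closure P \<subseteq> F\<close> by auto
    then show ?thesis using F that by auto
  qed
  have "connected_component_set (S1 - \<delta>) g1 = C" "connected_component_set (S1 - \<delta>) g2 = C"
    using inC[of g1] inC[of g2] G connected_component_eq[of g1 "S1 - \<delta>" p]
      connected_component_eq[of g2 "S1 - \<delta>" p] unfolding C_def by auto
  then show False using G by auto
qed

lemma crosses_sym:
  assumes "crosses \<alpha> \<beta>"
  shows "crosses \<beta> \<alpha>"
proof (rule ccontr)
  assume N: "\<not> crosses \<beta> \<alpha>"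
  from assms have "is_pair \<alpha>" "is_pair \<beta>" unfolding crosses_def by auto
  then obtain a a' b b' where A: "\<alpha> = {a,a'}" "a \<noteq> a'" "a \<in> S1" "a' \<in> S1"
    and B: "\<beta> = {b,b'}" "b \<noteq> b'" "b \<in> S1" "b' \<in> S1"
    unfolding is_pair_def by blast
  have disj: "\<alpha> \<inter> \<beta> = {}" using assms unfolding crosses_def by blast
  have "\<not> sg a a' b * sg a a' b' < 0" using N crosses_iff[OF B(2-4) A(2-4)] A B by simp
  moreover have "sg a a' b \<noteq> 0" "sg a a' b' \<noteq> 0" using sg_zero[OF A(3,4) _ A(2), of b] sg_zero[OF A(3,4) _ A(2), of b'] A B disj by auto
  ultimately have "(sg a a' b < 0 \<and> sg a a' b' < 0) \<or> (sg a a' b > 0 \<and> sg a a' b' > 0)"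
    by (metis linorder_neqE_linordered_idom mult_pos_neg mult_neg_pos)
  then show False
  proof
    assume "sg a a' b < 0 \<and> sg a a' b' < 0"
    then have "\<not> crosses \<alpha> \<beta>"
      using closed_side[OF A(3,4,2), of \<alpha> \<beta>] A B by (auto simp: pair_iff)
    then show False using assms by simp
  next
    assume "sg a a' b > 0 \<and> sg a a' b' > 0"
    then have "\<not> crosses \<alpha> \<beta>"
      using closed_side[OF A(4,3) A(2)[symmetric], of \<alpha> \<beta>] A B by (auto simp: pair_iff sg_flip[of a a'])
    then show False using assms by simp
  qed
qed


lemma pair_obtain:
  assumes "is_pair \<alpha>"
  obtains a a' where "\<alpha> = {a,a'}" "a \<noteq> a'" "a \<in> S1" "a' \<in> S1"
  using assms unfolding is_pair_def by blast

lemma S1_closed: "closed S1"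
  unfolding S1_def by simp

lemma lam_closure_elem:
  assumes "\<alpha> \<in> lam_closure L" "\<forall>\<gamma>\<in>L. is_pair \<gamma>"
  obtains a a' x y where "\<alpha> = {a,a'}" "a \<noteq> a'" "a \<in> S1" "a' \<in> S1"
    "\<forall>n. {x n, y n} \<in> L" "\<forall>n. x n \<noteq> y n \<and> x n \<in> S1 \<and> y n \<in> S1"
    "x \<longlonglongrightarrow> a" "y \<longlonglongrightarrow> a'"
proof -
  from assms(1) obtain a a' x y where A: "\<alpha> = {a,a'}" "a \<noteq> a'" "\<forall>n. {x n, y n} \<in> L"
    "x \<longlonglongrightarrow> a" "y \<longlonglongrightarrow> a'"
    unfolding lam_closure_def by blast
  have P: "\<forall>n. x n \<noteq> y n \<and> x n \<in> S1 \<and> y n \<in> S1"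
    using A(3) assms(2) pair_iff by blast
  have "a \<in> S1" using closed_sequentially[OF S1_closed, of x a] P A(4) by auto
  moreover have "a' \<in> S1" using closed_sequentially[OF S1_closed, of y a'] P A(5) by auto
  ultimately show ?thesis using that A P by blast
qed

lemma lam_closure_pair:
  assumes "\<alpha> \<in> lam_closure L" "\<forall>\<gamma>\<in>L. is_pair \<gamma>"
  shows "is_pair \<alpha>"
  using lam_closure_elem[OF assms] pair_iff by metis

lemma sub_lam_closure:
  assumes "\<forall>\<gamma>\<in>L. is_pair \<gamma>"
  shows "L \<subseteq> lam_closure L"
proof
  fix \<gamma> assume g: "\<gamma> \<in> L"
  then obtain a a' where A: "\<gamma> = {a,a'}" "a \<noteq> a'" using assms pair_obtain by metis
  have "\<gamma> = {a,a'} \<and> a \<noteq> a' \<and> (\<exists>x y. (\<forall>n. {x n, y n} \<in> L) \<and> x \<longlonglongrightarrow> a \<and> y \<longlonglongrightarrow> a')"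
  proof -
    have "\<exists>x y. (\<forall>n. {x n, y n} \<in> L) \<and> x \<longlonglongrightarrow> a \<and> y \<longlonglongrightarrow> a'"
      apply (rule exI[of _ "\<lambda>n. a"], rule exI[of _ "\<lambda>n. a'"])
      using A g by simp
    then show ?thesis using A by blast
  qed
  then show "\<gamma> \<in> lam_closure L" unfolding lam_closure_def by blast
qed

lemma sg_tendsto:
  assumes "u \<longlonglongrightarrow> b" "v \<longlonglongrightarrow> b'" "x \<longlonglongrightarrow> a"
  shows "(\<lambda>n. sg (u n) (v n) (x n)) \<longlonglongrightarrow> sg b b' a"
  unfolding sg_def by (intro tendsto_intros assms)

lemma openness:
  assumes "\<alpha> \<in> lam_closure L1" "\<beta> \<in> lam_closure L2"
    "\<forall>\<gamma>\<in>L1. is_pair \<gamma>" "\<forall>\<gamma>\<in>L2. is_pair \<gamma>" "crosses \<alpha> \<beta>"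
  shows "\<exists>\<alpha>'\<in>L1. \<exists>\<beta>'\<in>L2. crosses \<alpha>' \<beta>'"
proof -
  obtain a a' x y where A: "\<alpha> = {a,a'}" "a \<noteq> a'" "a \<in> S1" "a' \<in> S1"
    "\<forall>n. {x n, y n} \<in> L1" "\<forall>n. x n \<noteq> y n \<and> x n \<in> S1 \<and> y n \<in> S1"
    "x \<longlonglongrightarrow> a" "y \<longlonglongrightarrow> a'"
    using lam_closure_elem[OF assms(1,3)] by blast
  obtain b b' u v where B: "\<beta> = {b,b'}" "b \<noteq> b'" "b \<in> S1" "b' \<in> S1"
    "\<forall>n. {u n, v n} \<in> L2" "\<forall>n. u n \<noteq> v n \<and> u n \<in> S1 \<and> v n \<in> S1"
    "u \<longlonglongrightarrow> b" "v \<longlonglongrightarrow> b'"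
    using lam_closure_elem[OF assms(2,4)] by blast
  have neg: "sg b b' a * sg b b' a' < 0"
    using crosses_iff[OF A(2,3,4) B(2,3,4)] assms(5) A B by simp
  have "(\<lambda>n. sg (u n) (v n) (x n) * sg (u n) (v n) (y n)) \<longlonglongrightarrow> sg b b' a * sg b b' a'"
    by (intro tendsto_mult sg_tendsto A B)
  then have "eventually (\<lambda>n. sg (u n) (v n) (x n) * sg (u n) (v n) (y n) < 0) sequentially"
    using neg order_tendstoD(2) by blast
  then obtain n where n: "sg (u n) (v n) (x n) * sg (u n) (v n) (y n) < 0"
    using eventually_sequentially by auto
  have "crosses {x n, y n} {u n, v n}"
    using crosses_iff[of "x n" "y n" "u n" "v n"] A(6) B(6) n by simp
  then show ?thesis using A(5) B(5) by blast
qed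

lemma find_switch:
  assumes "xs \<noteq> []" "Q (hd xs)" "\<not> Q (last xs)"
  shows "\<exists>i. Suc i < length xs \<and> Q (xs ! i) \<and> \<not> Q (xs ! Suc i)"
  using assms
proof (induction xs)
  case Nil then show ?case by simp
next
  case (Cons x ys)
  show ?case
  proof (cases "ys = []")
    case True then show ?thesis using Cons by simp
  next
    case False
    show ?thesis
    proof (cases "Q (hd ys)")
      case True
      then obtain i where "Suc i < length ys" "Q (ys ! i)" "\<not> Q (ys ! Suc i)"
        using Cons False by auto
      then show ?thesis by (intro exI[of _ "Suc i"]) auto
    next
      case qf: False
      then show ?thesis using Cons False
        by (intro exI[of _ 0]) (auto simp: hd_conv_nth)
    qed
  qed
qed


lemma chain_ext:
  assumes "ys \<noteq> []" "R x (hd ys)" "R (last ys) y" "\<forall>i. Suc i < length ys \<longrightarrow> R (ys!i) (ys!Suc i)"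
  shows "\<forall>i. Suc i < length (x # ys @ [y]) \<longrightarrow> R ((x # ys @ [y])!i) ((x # ys @ [y])!Suc i)"
proof (intro allI impI)
  fix i assume i: "Suc i < length (x # ys @ [y])"
  show "R ((x # ys @ [y]) ! i) ((x # ys @ [y]) ! Suc i)"
  proof (cases i)
    case 0 then show ?thesis using assms(1,2) by (simp add: hd_conv_nth nth_append)
  next
    case (Suc j)
    then have j: "j < length ys" using i by simp
    show ?thesis
    proof (cases "Suc j < length ys")
      case True then show ?thesis using assms(4) Suc j by (simp add: nth_append)
    next
      case False then have "Suc j = length ys" using j by simp
      then show ?thesis using assms(1,3) Suc by (simp add: nth_append last_conv_nth)
    qed
  qed
qed

lemma open_sg: "open {z. sg b b' z > 0}"
proof -
  have "continuous_on UNIV (sg b b')" by (rule sg_cont)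
  then show ?thesis using open_Collect_less[of "\<lambda>z. 0" "sg b b'"] by simp
qed

lemma no_cross_false:
  assumes pl: "prelamination Lp" "prelamination Lm" and ft: "fully_transverse Lp Lm"
    and ap: "is_pair \<alpha>" and nc: "\<forall>\<gamma>\<in>Lp \<union> Lm. \<not> crosses \<gamma> \<alpha>"
  shows False
proof -
  obtain a a' where A: "\<alpha> = {a,a'}" "a \<noteq> a'" "a \<in> S1" "a' \<in> S1" using ap pair_obtain by metis
  define L where "L = Lp \<union> Lm"
  have Lpair: "\<forall>\<gamma>\<in>L. is_pair \<gamma>" using pl unfolding prelamination_def L_def by blast
  have dens: "S1 \<subseteq> closure (\<Union>L)" using ft unfolding fully_transverse_def endpoints_def L_def by blast
  have endp: "\<exists>\<delta>\<in>L. \<exists>e\<in>\<delta>. sg c c' e > 0" if cc: "c \<in> S1" "c' \<in> S1" "c \<noteq> c'" for c c'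
  proof -
    obtain p where "p \<in> S1" "sg c c' p > 0" using pos_side[OF cc] by auto
    then have "{z. sg c c' z > 0} \<inter> closure (\<Union>L) \<noteq> {}" using dens by auto
    then have "{z. sg c c' z > 0} \<inter> \<Union>L \<noteq> {}" using open_Int_closure_eq_empty[OF open_sg] by blast
    then show ?thesis by blast
  qed
  obtain \<delta>1 e1 where d1: "\<delta>1 \<in> L" "e1 \<in> \<delta>1" "sg a a' e1 > 0" using endp[OF A(3,4,2)] by blast
  obtain \<delta>2 e2 where d2: "\<delta>2 \<in> L" "e2 \<in> \<delta>2" "sg a' a e2 > 0"
    using endp[OF A(4,3) A(2)[symmetric]] by blast
  have d2': "sg a a' e2 < 0" using d2(3) sg_flip[of a a' e2] by linarith
  define Q where "Q \<gamma> \<longleftrightarrow> (\<exists>z\<in>\<gamma>. sg a a' z > 0)" for \<gamma>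
  have Qall: "\<forall>z\<in>\<gamma>. sg a a' z \<ge> 0" if g: "\<gamma> \<in> L" "Q \<gamma>" for \<gamma>
  proof (rule ccontr)
    assume "\<not> ?thesis"
    then obtain z where z: "z \<in> \<gamma>" "sg a a' z < 0" by force
    obtain w where w: "w \<in> \<gamma>" "sg a a' w > 0" using g(2) Q_def by auto
    obtain g1 g2 where G: "\<gamma> = {g1,g2}" "g1 \<noteq> g2" "g1 \<in> S1" "g2 \<in> S1"
      using Lpair g(1) pair_obtain by metis
    have "\<not> crosses \<gamma> \<alpha>" using nc g(1) L_def by blast
    then have "\<not> sg a a' g1 * sg a a' g2 < 0" using crosses_iff[OF G(2-4) A(2-4)] G A by simp
    moreover have "sg a a' z * sg a a' w < 0" using z w mult_neg_pos by blast
    moreover have "z \<noteq> w" using z w by auto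
    ultimately show False using z(1) w(1) G(1) by (auto simp: mult.commute)
  qed
  obtain xs where xs: "xs \<noteq> []" "hd xs = \<delta>1" "last xs = \<delta>2" "set xs \<subseteq> L"
    "\<forall>i. Suc i < length xs \<longrightarrow> crosses (xs ! i) (xs ! Suc i)"
    using ft d1(1) d2(1) unfolding fully_transverse_def L_def by blast
  have "Q (hd xs)" using xs d1 Q_def by auto
  moreover have "\<not> Q (last xs)" using xs d2 d2' Qall[of \<delta>2] by force
  ultimately obtain i where i: "Suc i < length xs" "Q (xs ! i)" "\<not> Q (xs ! Suc i)"
    using find_switch[OF xs(1)] by blast
  have inL: "xs ! i \<in> L" "xs ! Suc i \<in> L" using i(1) xs(4) nth_mem
    by (metis Suc_lessD subsetD)+
  have "\<not> crosses (xs ! i) (xs ! Suc i)"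
  proof (rule closed_side[OF A(3,4,2)])
    show "is_pair (xs ! i)" "is_pair (xs ! Suc i)" using inL Lpair by auto
    show "\<forall>z\<in>xs ! i. 0 \<le> sg a a' z" using Qall inL i by blast
    show "\<forall>z\<in>xs ! Suc i. sg a a' z \<le> 0" using i(3) Q_def by force
  qed
  then show False using xs(5) i(1) by blast
qed


lemma closure_prelam:
  assumes "prelamination L" "L \<subseteq> H" "H \<subseteq> lam_closure L"
  shows "prelamination H"
proof -
  have Lp: "\<forall>\<gamma>\<in>L. is_pair \<gamma>" using assms(1) prelamination_def by blast
  have "\<forall>\<alpha>\<in>H. is_pair \<alpha>" using assms(3) lam_closure_pair[OF _ Lp] by blast
  moreover have "\<forall>\<alpha>\<in>H. \<forall>\<beta>\<in>H. \<not> crosses \<alpha> \<beta>"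
  proof (intro ballI notI)
    fix \<alpha> \<beta> assume "\<alpha> \<in> H" "\<beta> \<in> H" "crosses \<alpha> \<beta>"
    then obtain \<alpha>' \<beta>' where "\<alpha>' \<in> L" "\<beta>' \<in> L" "crosses \<alpha>' \<beta>'"
      using openness[of \<alpha> L \<beta> L] Lp assms(3) by blast
    then show False using assms(1) prelamination_def by blast
  qed
  ultimately show ?thesis unfolding prelamination_def by blast
qed

theorem lemma3p15:
  assumes "prelamination Lp" and "prelamination Lm"
    and "fully_transverse Lp Lm"
    and "Lp \<subseteq> Hp" and "Hp \<subseteq> lam_closure Lp"
    and "Lm \<subseteq> Hm" and "Hm \<subseteq> lam_closure Lm"
  shows "prelamination Hp \<and> prelamination Hm \<and> fully_transverse Hp Hm"
proof -
  have pHp: "prelamination Hp" using closure_prelam assms by blast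
  have pHm: "prelamination Hm" using closure_prelam assms by blast
  have Pp: "\<forall>\<gamma>\<in>Lp. is_pair \<gamma>" using assms(1) prelamination_def by blast
  have Pm: "\<forall>\<gamma>\<in>Lm. is_pair \<gamma>" using assms(2) prelamination_def by blast
  have HPp: "\<forall>\<gamma>\<in>Hp. is_pair \<gamma>" using pHp prelamination_def by blast
  have HPm: "\<forall>\<gamma>\<in>Hm. is_pair \<gamma>" using pHm prelamination_def by blast
  have LpC: "Lp \<subseteq> lam_closure Lp" by (rule sub_lam_closure[OF Pp])
  have LmC: "Lm \<subseteq> lam_closure Lm" by (rule sub_lam_closure[OF Pm])
  have ex_cross: "\<exists>\<gamma>\<in>Lp \<union> Lm. crosses \<alpha> \<gamma>" if "is_pair \<alpha>" for \<alpha>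
  proof (rule ccontr)
    assume "\<not> ?thesis"
    then have "\<forall>\<gamma>\<in>Lp \<union> Lm. \<not> crosses \<gamma> \<alpha>" using crosses_sym by blast
    then show False using no_cross_false[OF assms(1-3) that] by blast
  qed
  have disj: "Hp \<inter> Hm = {}"
  proof (rule ccontr)
    assume "Hp \<inter> Hm \<noteq> {}"
    then obtain \<alpha> where a: "\<alpha> \<in> Hp" "\<alpha> \<in> Hm" by blast
    have "\<forall>\<gamma>\<in>Lp \<union> Lm. \<not> crosses \<gamma> \<alpha>"
    proof (intro ballI notI)
      fix \<gamma> assume g: "\<gamma> \<in> Lp \<union> Lm" "crosses \<gamma> \<alpha>"
      show False
      proof (cases "\<gamma> \<in> Lp")
        case True
        then obtain \<alpha>' \<beta>' where "\<alpha>' \<in> Lp" "\<beta>' \<in> Lp" "crosses \<alpha>' \<beta>'"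
          using openness[of \<gamma> Lp \<alpha> Lp] Pp LpC assms(5) a g by blast
        then show False using assms(1) prelamination_def by blast
      next
        case False
        then have "\<gamma> \<in> Lm" using g by blast
        then obtain \<alpha>' \<beta>' where "\<alpha>' \<in> Lm" "\<beta>' \<in> Lm" "crosses \<alpha>' \<beta>'"
          using openness[of \<gamma> Lm \<alpha> Lm] Pm LmC assms(7) a g by blast
        then show False using assms(2) prelamination_def by blast
      qed
    qed
    then show False using no_cross_false[OF assms(1-3)] a HPp by blast
  qed
  have dens: "S1 \<subseteq> closure (endpoints (Hp \<union> Hm))"
  proof -
    have "endpoints (Lp \<union> Lm) \<subseteq> endpoints (Hp \<union> Hm)"
      using assms(4,6) unfolding endpoints_def by blast
    then have "closure (endpoints (Lp \<union> Lm)) \<subseteq> closure (endpoints (Hp \<union> Hm))"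
      by (rule closure_mono)
    then show ?thesis using assms(3) unfolding fully_transverse_def by blast
  qed
  have chains: "\<exists>xs. xs \<noteq> [] \<and> hd xs = \<alpha> \<and> last xs = \<beta> \<and> set xs \<subseteq> Hp \<union> Hm \<and>
          (\<forall>i. Suc i < length xs \<longrightarrow> crosses (xs ! i) (xs ! Suc i))"
    if ab: "\<alpha> \<in> Hp \<union> Hm" "\<beta> \<in> Hp \<union> Hm" for \<alpha> \<beta>
  proof -
    have "is_pair \<alpha>" "is_pair \<beta>" using ab HPp HPm by auto
    then obtain \<gamma> \<delta> where g: "\<gamma> \<in> Lp \<union> Lm" "crosses \<alpha> \<gamma>" and d: "\<delta> \<in> Lp \<union> Lm" "crosses \<beta> \<delta>"
      using ex_cross by blast
    obtain ys where ys: "ys \<noteq> []" "hd ys = \<gamma>" "last ys = \<delta>" "set ys \<subseteq> Lp \<union> Lm"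
      "\<forall>i. Suc i < length ys \<longrightarrow> crosses (ys ! i) (ys ! Suc i)"
      using assms(3) g(1) d(1) unfolding fully_transverse_def by blast
    have "\<forall>i. Suc i < length (\<alpha> # ys @ [\<beta>]) \<longrightarrow> crosses ((\<alpha> # ys @ [\<beta>])!i) ((\<alpha> # ys @ [\<beta>])!Suc i)"
      by (rule chain_ext) (use ys g d crosses_sym in auto)
    moreover have "set (\<alpha> # ys @ [\<beta>]) \<subseteq> Hp \<union> Hm" using ys(4) ab assms(4,6) by auto
    ultimately show ?thesis by (intro exI[of _ "\<alpha> # ys @ [\<beta>]"]) auto
  qed
  have "fully_transverse Hp Hm"
    unfolding fully_transverse_def using disj dens chains by blast
  then show ?thesis using pHp pHm by blast
qed

end
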